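(* Let $p>1$. Then (1) $\sin_p(r+s)\le\sin_p(r)+\sin_p(s)$ for $r,s\in(0,\pi_p/4)$; (2) $\tanh_p(r+s)\le\tanh_p(r)+\tanh_p(s)$ for $r,s\in(0,b_p/2)$; (3) $\tan_p(r+s)\ge\tan_p(r)+\tan_p(s)$ for $r,s\in(0,b_p/2)$; (4) $\sinh_p(r+s)\ge\sinh_p(r)+\sinh_p(s)$ for $r,s\in(0,c_p/2)$.
   Context: For $p>1$ and $y\in(0,1)$ let $\arcsin_p y=\int_0^y(1-t^p)^{-1/p}dt$, $\arctan_p y=\int_0^y(1+t^p)^{-1}dt$, $\operatorname{arsinh}_p y=\int_0^y(1+t^p)^{-1/p}dt$, $\operatorname{artanh}_p y=\int_0^y(1-t^p)^{-1}dt$. Let $\pi_p=\frac{2\pi}{p\sin(\pi/p)}=2\arcsin_p(1)$, $b_p=\arctan_p(1)$, $c_p=\operatorname{arsinh}_p(1)$. Then $\sin_p:(0,\pi_p/2)\to(0,1)$, $\tan_p:(0,b_p)\to(0,1)$, $\sinh_p:(0,c_p)\to(0,1)$, $\tanh_p:(0,\infty)\to(0,1)$ are the inverse functions of $\arcsin_p$, $\arctan_p$, $\operatorname{arsinh}_p$, $\operatorname{artanh}_p$ respectively. *)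

theory Defs
  imports "HOL-Analysis.Analysis"
begin

definition arcsin_p :: "real \<Rightarrow> real \<Rightarrow> real" where
  "arcsin_p p y = integral {0..y} (\<lambda>t. (1 - t powr p) powr (-1/p))"
definition arctan_p :: "real \<Rightarrow> real \<Rightarrow> real" where
  "arctan_p p y = integral {0..y} (\<lambda>t. 1 / (1 + t powr p))"
definition arsinh_p :: "real \<Rightarrow> real \<Rightarrow> real" where
  "arsinh_p p y = integral {0..y} (\<lambda>t. (1 + t powr p) powr (-1/p))"
definition artanh_p :: "real \<Rightarrow> real \<Rightarrow> real" where
  "artanh_p p y = integral {0..y} (\<lambda>t. 1 / (1 - t powr p))"

definition pi_p :: "real \<Rightarrow> real" where
  "pi_p p = 2 * pi / (p * sin (pi / p))"
definition b_p :: "real \<Rightarrow> real" where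
  "b_p p = arctan_p p 1"
definition c_p :: "real \<Rightarrow> real" where
  "c_p p = arsinh_p p 1"

definition sin_p :: "real \<Rightarrow> real \<Rightarrow> real" where
  "sin_p p x = (THE y. y \<in> {0<..<1} \<and> arcsin_p p y = x)"
definition tan_p :: "real \<Rightarrow> real \<Rightarrow> real" where
  "tan_p p x = (THE y. y \<in> {0<..<1} \<and> arctan_p p y = x)"
definition sinh_p :: "real \<Rightarrow> real \<Rightarrow> real" where
  "sinh_p p x = (THE y. y \<in> {0<..<1} \<and> arsinh_p p y = x)"
definition tanh_p :: "real \<Rightarrow> real \<Rightarrow> real" where
  "tanh_p p x = (THE y. y \<in> {0<..<1} \<and> artanh_p p y = x)"

end

theory Submission imports Defs begin


locale incint = fixes g :: "real \<Rightarrow> real" and L :: real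
  assumes L: "1 \<le> L" and cont: "continuous_on {0..<L} g"
    and pos: "\<And>t. 0 \<le> t \<Longrightarrow> t < L \<Longrightarrow> 0 < g t"
begin

lemma cont_sub: "0 \<le> a \<Longrightarrow> b < L \<Longrightarrow> continuous_on {a..b} g"
  by (rule continuous_on_subset[OF cont]) auto

lemma integrable: "0 \<le> a \<Longrightarrow> b < L \<Longrightarrow> g integrable_on {a..b}"
  by (rule integrable_continuous_interval[OF cont_sub])

lemma int_pos: assumes "0 \<le> a" "a < b" "b < L" shows "integral {a..b} g > 0"
proof -
  have "compact {a..b}" "{a..b} \<noteq> {}" using assms by auto
  from continuous_attains_inf[OF this cont_sub[OF assms(1,3)]]
  obtain m where m: "m \<in> {a..b}" "\<And>y. y \<in> {a..b} \<Longrightarrow> g m \<le> g y" by blast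
  have gm: "g m > 0" using m assms by (intro pos) auto
  have "integral {a..b} (\<lambda>_. g m) \<le> integral {a..b} g"
    by (rule integral_le) (use m integrable[OF assms(1,3)] in auto)
  moreover have "integral {a..b} (\<lambda>_. g m) = g m * (b - a)" using assms by simp
  ultimately show ?thesis using gm assms by (smt (verit) mult_pos_pos)
qed

lemma F0: "integral {0..0} g = 0" by simp

lemma Fmono: assumes "0 \<le> a" "a < b" "b < L"
  shows "integral {0..a} g < integral {0..b} g"
proof -
  have "integral {0..a} g + integral {a..b} g = integral {0..b} g"
    using Henstock_Kurzweil_Integration.integral_combine[where f=g and a=0 and c=a and b=b] assms integrable[of 0 b] by auto
  thus ?thesis using int_pos[OF assms] by linarith
qed

lemma Fmono_iff: assumes "0 \<le> a" "0 \<le> b" "a < L" "b < L"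
  shows "integral {0..a} g < integral {0..b} g \<longleftrightarrow> a < b"
  using Fmono[of a b] Fmono[of b a] assms by (cases a b rule: linorder_cases) auto

lemma Fcont: "0 \<le> Y \<Longrightarrow> Y < L \<Longrightarrow> continuous_on {0..Y} (\<lambda>y. integral {0..y} g)"
  by (rule indefinite_integral_continuous_1[OF integrable]) auto

lemma exist: assumes "0 < x" "0 \<le> Y" "Y < L" "x < integral {0..Y} g"
  shows "\<exists>y. 0 < y \<and> y < Y \<and> integral {0..y} g = x"
proof -
  from IVT'[of "\<lambda>y. integral {0..y} g" 0 x Y, OF _ _ _ Fcont[OF assms(2,3)]] assms
  obtain y where "0 \<le> y" "y \<le> Y" "integral {0..y} g = x" by auto
  thus ?thesis using assms by (metis F0 less_eq_real_def less_irrefl)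
qed

lemma the_eq: assumes "0 < a" "a < 1" "integral {0..a} g = x"
  shows "(THE y. y \<in> {0<..<1} \<and> integral {0..y} g = x) = a"
proof (rule the_equality)
  show "a \<in> {0<..<1} \<and> integral {0..a} g = x" using assms by auto
next
  fix y assume "y \<in> {0<..<1} \<and> integral {0..y} g = x"
  thus "y = a" using Fmono_iff[of y a] Fmono_iff[of a y] assms L by auto
qed

lemma super: assumes "0 \<le> a" "0 \<le> b" "a + b < L"
  and mono: "\<And>s t. 0 \<le> s \<Longrightarrow> s \<le> t \<Longrightarrow> t < L \<Longrightarrow> g s \<le> g t"
  shows "integral {0..a} g + integral {0..b} g \<le> integral {0..a+b} g"
proof -
  have c: "integral {0..b} g + integral {b..a+b} g = integral {0..a+b} g"
    using Henstock_Kurzweil_Integration.integral_combine[where f=g and a=0 and c=b and b="a+b"] assms integrable[of 0 "a+b"] by auto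
  have "integral {0..a} (g \<circ> (+) b) = integral {0+b..a+b} g"
    by (rule integral_shift_Icc_real)
  moreover have "integral {0..a} g \<le> integral {0..a} (g \<circ> (+) b)"
  proof (rule integral_le)
    show "g integrable_on {0..a}" using assms by (intro integrable) auto
    have "continuous_on {0..a} (\<lambda>x. g (b + x))"
      by (rule continuous_on_compose2[OF cont_sub[of b "a+b"]]) (use assms in \<open>auto intro!: continuous_intros\<close>)
    hence "continuous_on {0..a} (g \<circ> (+) b)" by (simp add: o_def)
    thus "(g \<circ> (+) b) integrable_on {0..a}" by (rule integrable_continuous_interval)
  qed (use assms in auto)
  ultimately show ?thesis using c by simp
qed

lemma sub: assumes "0 \<le> a" "0 \<le> b" "a + b < L"
  and mono: "\<And>s t. 0 \<le> s \<Longrightarrow> s \<le> t \<Longrightarrow> t < L \<Longrightarrow> g t \<le> g s"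
  shows "integral {0..a+b} g \<le> integral {0..a} g + integral {0..b} g"
proof -
  have c: "integral {0..b} g + integral {b..a+b} g = integral {0..a+b} g"
    using Henstock_Kurzweil_Integration.integral_combine[where f=g and a=0 and c=b and b="a+b"] assms integrable[of 0 "a+b"] by auto
  have "integral {0..a} (g \<circ> (+) b) = integral {0+b..a+b} g"
    by (rule integral_shift_Icc_real)
  moreover have "integral {0..a} (g \<circ> (+) b) \<le> integral {0..a} g"
  proof (rule integral_le)
    show "g integrable_on {0..a}" using assms by (intro integrable) auto
    have "continuous_on {0..a} (\<lambda>x. g (b + x))"
      by (rule continuous_on_compose2[OF cont_sub[of b "a+b"]]) (use assms in \<open>auto intro!: continuous_intros\<close>)
    hence "continuous_on {0..a} (g \<circ> (+) b)" by (simp add: o_def)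
    thus "(g \<circ> (+) b) integrable_on {0..a}" by (rule integrable_continuous_interval)
  qed (use assms in auto)
  ultimately show ?thesis using c by simp
qed

end


lemma pp_cont: "continuous_on S (\<lambda>t::real. t powr p)" if "p > 0" "S \<subseteq> {0..}"
  by (rule continuous_on_powr') (use that in \<open>auto intro!: continuous_intros\<close>)

lemma pp_lt1: "0 \<le> t \<Longrightarrow> t < 1 \<Longrightarrow> (0::real) < p \<Longrightarrow> t powr p < 1"
  using powr_less_mono2[of p t 1] by simp

lemma pp_mono: "0 \<le> s \<Longrightarrow> s \<le> t \<Longrightarrow> (0::real) < p \<Longrightarrow> s powr p \<le> t powr p"
  by (rule powr_mono2) auto

lemma I1: assumes "p > 1" shows "incint (\<lambda>t. (1 - t powr p) powr (-1/p)) 1"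
proof
  have "continuous_on {0..<1::real} (\<lambda>t. t powr p)" using assms by (intro pp_cont) auto
  moreover have "\<forall>t\<in>{0..<1::real}. 1 - t powr p \<noteq> 0"
    using pp_lt1[of _ p] assms by force
  ultimately show "continuous_on {0..<1} (\<lambda>t::real. (1 - t powr p) powr (-1/p))"
    by (auto intro!: continuous_intros)
  fix t :: real assume "0 \<le> t" "t < 1" thus "0 < (1 - t powr p) powr (-1/p)"
    using pp_lt1[of t p] assms by simp
qed (use assms in auto)

lemma I4: assumes "p > 1" shows "incint (\<lambda>t. 1 / (1 - t powr p)) 1"
proof
  have "continuous_on {0..<1::real} (\<lambda>t. t powr p)" using assms by (intro pp_cont) auto
  moreover have "\<forall>t\<in>{0..<1::real}. 1 - t powr p \<noteq> 0"
    using pp_lt1[of _ p] assms by force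
  ultimately show "continuous_on {0..<1} (\<lambda>t::real. 1 / (1 - t powr p))"
    by (auto intro!: continuous_intros)
  fix t :: real assume "0 \<le> t" "t < 1" thus "0 < 1 / (1 - t powr p)"
    using pp_lt1[of t p] assms by simp
qed (use assms in auto)

lemma I2: assumes "p > 1" shows "incint (\<lambda>t. 1 / (1 + t powr p)) 2"
proof
  have "continuous_on {0..<2::real} (\<lambda>t. t powr p)" using assms by (intro pp_cont) auto
  moreover have "\<forall>t\<in>{0..<2::real}. 1 + t powr p \<noteq> 0"
    by (smt (verit) powr_ge_zero)
  ultimately show "continuous_on {0..<2} (\<lambda>t::real. 1 / (1 + t powr p))"
    by (auto intro!: continuous_intros)
  fix t :: real show "0 < 1 / (1 + t powr p)" by (smt (verit) powr_ge_zero divide_pos_pos)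
qed (use assms in auto)

lemma I3: assumes "p > 1" shows "incint (\<lambda>t. (1 + t powr p) powr (-1/p)) 2"
proof
  have "continuous_on {0..<2::real} (\<lambda>t. t powr p)" using assms by (intro pp_cont) auto
  moreover have "\<forall>t\<in>{0..<2::real}. 1 + t powr p \<noteq> 0"
    by (smt (verit) powr_ge_zero)
  ultimately show "continuous_on {0..<2} (\<lambda>t::real. (1 + t powr p) powr (-1/p))"
    by (auto intro!: continuous_intros)
  fix t :: real show "0 < (1 + t powr p) powr (-1/p)" by (smt (verit) powr_ge_zero powr_gt_zero)
qed (use assms in auto)

lemma M1: assumes "(p::real) > 1" "(0::real) \<le> s" "s \<le> t" "t < 1"
  shows "(1 - s powr p) powr (-1/p) \<le> (1 - t powr p) powr (-1/p)"
  using assms pp_lt1[of t p] pp_mono[of s t p] by (intro powr_mono2') auto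

lemma M4: assumes "(p::real) > 1" "(0::real) \<le> s" "s \<le> t" "t < 1"
  shows "1 / (1 - s powr p) \<le> 1 / (1 - t powr p)"
  using assms pp_lt1[of t p] pp_mono[of s t p] by (intro divide_left_mono) auto

lemma M2: assumes "(p::real) > 1" "(0::real) \<le> s" "s \<le> t"
  shows "1 / (1 + t powr p) \<le> 1 / (1 + s powr p)"
  using assms pp_mono[of s t p] by (intro divide_left_mono) (auto simp: add_pos_nonneg)

lemma M3: assumes "(p::real) > 1" "(0::real) \<le> s" "s \<le> t"
  shows "(1 + t powr p) powr (-1/p) \<le> (1 + s powr p) powr (-1/p)"
  using assms pp_mono[of s t p] by (intro powr_mono2') (auto simp: add_pos_nonneg)



lemma beta_val: assumes "0 < q" "q < (1::real)"
  shows "Beta q (1 - q) = pi / sin (pi * q)"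
proof -
  have "Gamma (complex_of_real q) * Gamma (1 - complex_of_real q) =
        complex_of_real pi / sin (complex_of_real pi * complex_of_real q)"
    by (rule Gamma_reflection_complex)
  hence "complex_of_real (Gamma q * Gamma (1 - q)) = complex_of_real (pi / sin (pi * q))"
  proof -
    have e1: "1 - complex_of_real q = complex_of_real (1 - q)" by simp
    have e2: "sin (complex_of_real pi * complex_of_real q) = complex_of_real (sin (pi * q))"
      by (metis of_real_mult sin_of_real)
    show ?thesis using \<open>Gamma (complex_of_real q) * _ = _\<close> unfolding e1 e2 Gamma_complex_of_real
      by simp
  qed
  hence "Gamma q * Gamma (1 - q) = pi / sin (pi * q)" by (rule of_real_eq_iff[THEN iffD1])
  thus ?thesis by (simp add: Beta_def)
qed

lemma arcsin_sub: assumes "p > 1" "0 < Y" "Y < 1"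
  shows "arcsin_p p (Y powr (1/p)) = (1/p) * integral {0..Y} (\<lambda>u. u powr (1/p - 1) * (1 - u) powr ((1 - 1/p) - 1))"
proof -
  define q where "q = 1/p"
  have q: "0 < q" "q < 1" using assms by (auto simp: q_def)
  define y where "y = Y powr q"
  have y: "0 < y" "y < 1" using assms q pp_lt1[of Y q] by (auto simp: y_def)
  let ?f = "\<lambda>t. (1 - t powr p) powr (-1/p)"
  let ?h = "\<lambda>u. u powr (q - 1) * (1 - u) powr ((1 - q) - 1)"
  have F1: "((\<lambda>u. (q * u powr (q - 1)) *\<^sub>R ?f (u powr q)) has_integral
        (integral {0 powr q..Y powr q} ?f - integral {Y powr q..0 powr q} ?f)) {0..Y}"
  proof (rule has_integral_substitution_general[where s="{0}" and c=0 and d=y])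
    show "(\<lambda>u. u powr q) ` {0..Y} \<subseteq> {0..y}"
    proof (rule image_subsetI)
      fix u assume "u \<in> {0..Y}"
      thus "u powr q \<in> {0..y}" using pp_mono[of u Y q] q by (simp add: y_def)
    qed
    show "continuous_on {0..y} ?f" by (rule incint.cont_sub[OF I1[OF assms(1)]]) (use y in auto)
    show "continuous_on {0..Y} (\<lambda>u. u powr q)" using q by (intro pp_cont) auto
    fix x assume "x \<in> {0..Y} - {0}"
    hence "x > 0" by auto
    thus "((\<lambda>u. u powr q) has_real_derivative q * x powr (q - 1)) (at x within {0..Y})"
      by (rule has_field_derivative_at_within[OF has_real_derivative_powr])
  qed (use assms in auto)
  have F2: "0 powr q = 0" "integral {Y powr q..0 powr q} ?f = 0" using y by (auto simp: y_def)
  have F4: "(q * u powr (q - 1)) *\<^sub>R ?f (u powr q) = q * ?h u" if "u \<in> {0..Y}" for u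
  proof -
    have "(u powr q) powr p = u" using that assms by (simp add: powr_powr q_def)
    thus ?thesis by (simp add: q_def)
  qed
  have E: "integral {0 powr q..Y powr q} ?f - integral {Y powr q..0 powr q} ?f = arcsin_p p y"
    using F2 by (simp add: arcsin_p_def y_def)
  have "((\<lambda>u. q * ?h u) has_integral arcsin_p p y) {0..Y}"
    using F1 unfolding E by (rule has_integral_cong[THEN iffD1, rotated]) (use F4 in auto)
  moreover have "((\<lambda>u. q * ?h u) has_integral q * integral {0..Y} ?h) {0..Y}"
  proof (intro has_integral_mult_right integrable_integral)
    have "?h integrable_on {0..1}" using integrable_Beta'[of q "1-q"] q by simp
    thus "?h integrable_on {0..Y}" by (rule integrable_on_subinterval) (use assms in auto)
  qed
  ultimately have "arcsin_p p y = q * integral {0..Y} ?h" by (rule has_integral_unique)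
  thus ?thesis by (simp add: y_def q_def)
qed

lemma sin_ex: assumes "p > 1" "0 < x" "x < pi_p p / 2"
  shows "\<exists>y. 0 \<le> y \<and> y < 1 \<and> x < arcsin_p p y"
proof -
  define q where "q = 1/p"
  have q: "0 < q" "q < 1" using assms by (auto simp: q_def)
  let ?h = "\<lambda>u. u powr (q - 1) * (1 - u) powr ((1 - q) - 1)"
  define \<Phi> where "\<Phi> Y = integral {0..Y} ?h" for Y
  have int: "?h integrable_on {0..1}" using integrable_Beta'[of q "1-q"] q by simp
  have "\<Phi> 1 = Beta q (1 - q)" unfolding \<Phi>_def using has_integral_Beta_real[of q "1-q"] q
    by (simp add: integral_unique)
  also have "\<dots> = pi / sin (pi * q)" by (rule beta_val[OF q])
  also have "\<dots> = p * (pi_p p / 2)" using assms by (simp add: pi_p_def q_def)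
  finally have P1: "\<Phi> 1 = p * (pi_p p / 2)" .
  have cont: "continuous_on {0..1} \<Phi>" unfolding \<Phi>_def by (rule indefinite_integral_continuous_1[OF int])
  define v where "v = (p * x + \<Phi> 1) / 2"
  have "p * x < p * (pi_p p / 2)" using assms by (intro mult_strict_left_mono) auto
  hence px: "p * x < \<Phi> 1" using P1 by simp
  have "0 < p * x" using assms by simp
  hence v: "p * x < v" "v < \<Phi> 1" "0 < v" using px by (auto simp: v_def)
  have P0: "\<Phi> 0 = 0" by (simp add: \<Phi>_def)
  obtain Y where Y: "0 \<le> Y" "Y \<le> 1" "\<Phi> Y = v"
    using IVT'[of \<Phi> 0 v 1, OF _ _ _ cont] v P0 by auto
  have Y1: "Y < 1" using Y v by (cases "Y = 1") auto
  have Y0: "Y > 0" using Y v P0 by (cases "Y = 0") auto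
  have "arcsin_p p (Y powr (1/p)) = v / p"
    using arcsin_sub[OF assms(1) Y0 Y1] Y(3) unfolding \<Phi>_def q_def by simp
  moreover have "x < v / p" using v assms by (simp add: field_simps)
  moreover have "Y powr (1/p) < 1" "0 \<le> Y powr (1/p)" using pp_lt1[of Y "1/p"] Y0 Y1 assms by auto
  ultimately show ?thesis by metis
qed



context incint begin

lemma super_inv: assumes "0 < a" "a < 1" "0 < b" "b < 1" "0 < c" "c < 1"
  and "integral {0..a} g + integral {0..b} g = integral {0..c} g"
  and mono: "\<And>s t. 0 \<le> s \<Longrightarrow> s \<le> t \<Longrightarrow> t < L \<Longrightarrow> g s \<le> g t"
  shows "c \<le> a + b"
proof (cases "a + b < 1")
  case True
  have "integral {0..a} g + integral {0..b} g \<le> integral {0..a+b} g"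
    using True L assms by (intro super mono) auto
  moreover have "a + b < c \<Longrightarrow> integral {0..a+b} g < integral {0..c} g"
    using True L assms by (intro Fmono) auto
  ultimately show ?thesis using assms(7) by linarith
qed (use assms in auto)

lemma sub_inv: assumes "0 < a" "a < 1" "0 < b" "b < 1" "0 < c" "c < 1" "2 \<le> L"
  and "integral {0..a} g + integral {0..b} g = integral {0..c} g"
  and mono: "\<And>s t. 0 \<le> s \<Longrightarrow> s \<le> t \<Longrightarrow> t < L \<Longrightarrow> g t \<le> g s"
  shows "a + b \<le> c"
proof -
  have "integral {0..a+b} g \<le> integral {0..a} g + integral {0..b} g"
    using L assms by (intro sub mono) auto
  moreover have "c < a + b \<Longrightarrow> integral {0..c} g < integral {0..a+b} g"
    using L assms by (intro Fmono) auto
  ultimately show ?thesis using assms(8) by linarith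
qed

end

theorem lemma2p11:
  fixes p :: real
  assumes "p > 1"
  shows "(\<forall>r s. r \<in> {0<..<pi_p p / 4} \<and> s \<in> {0<..<pi_p p / 4} \<longrightarrow>
            sin_p p (r + s) \<le> sin_p p r + sin_p p s)
       \<and> (\<forall>r s. r \<in> {0<..<b_p p / 2} \<and> s \<in> {0<..<b_p p / 2} \<longrightarrow>
            tanh_p p (r + s) \<le> tanh_p p r + tanh_p p s)
       \<and> (\<forall>r s. r \<in> {0<..<b_p p / 2} \<and> s \<in> {0<..<b_p p / 2} \<longrightarrow>
            tan_p p (r + s) \<ge> tan_p p r + tan_p p s)
       \<and> (\<forall>r s. r \<in> {0<..<c_p p / 2} \<and> s \<in> {0<..<c_p p / 2} \<longrightarrow>
            sinh_p p (r + s) \<ge> sinh_p p r + sinh_p p s)"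
proof -
  note i1 = I1[OF assms] and i2 = I2[OF assms] and i3 = I3[OF assms] and i4 = I4[OF assms]
  let ?g1 = "\<lambda>t. (1 - t powr p) powr (-1/p)"
  let ?g2 = "\<lambda>t. 1 / (1 + t powr p)"
  let ?g3 = "\<lambda>t. (1 + t powr p) powr (-1/p)"
  let ?g4 = "\<lambda>t. 1 / (1 - t powr p)"
  have E1: "\<exists>a. 0 < a \<and> a < 1 \<and> arcsin_p p a = x" if x: "0 < x" "x < pi_p p / 2" for x
  proof -
    obtain Y where Y: "0 \<le> Y" "Y < 1" "x < arcsin_p p Y" using sin_ex[OF assms x] by blast
    from incint.exist[OF i1 x(1) Y(1,2)] Y(3) show ?thesis
      unfolding arcsin_p_def using Y by force
  qed
  have E2: "\<exists>a. 0 < a \<and> a < 1 \<and> arctan_p p a = x" if "0 < x" "x < b_p p" for x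
    using incint.exist[OF i2 that(1), of 1] that unfolding b_p_def arctan_p_def by force
  have E3: "\<exists>a. 0 < a \<and> a < 1 \<and> arsinh_p p a = x" if "0 < x" "x < c_p p" for x
    using incint.exist[OF i3 that(1), of 1] that unfolding c_p_def arsinh_p_def by force
  have E4: "\<exists>a. 0 < a \<and> a < 1 \<and> artanh_p p a = x" if x: "0 < x" "x < b_p p" for x
  proof -
    obtain y where y: "0 < y" "y < 1" "arctan_p p y = (x + b_p p) / 2"
      using E2[of "(x + b_p p) / 2"] x by auto
    have "arctan_p p y \<le> artanh_p p y" unfolding arctan_p_def artanh_p_def
    proof (rule integral_le)
      show "?g2 integrable_on {0..y}" using y by (intro incint.integrable[OF i2]) auto
      show "?g4 integrable_on {0..y}" using y by (intro incint.integrable[OF i4]) auto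
      fix t assume t: "t \<in> {0..y}"
      hence "t powr p < 1" using pp_lt1[of t p] y assms by auto
      moreover have "0 \<le> t powr p" by simp
      ultimately show "?g2 t \<le> ?g4 t" by (smt (verit) divide_left_mono mult_pos_pos)
    qed
    hence "x < artanh_p p y" using y x by (simp add: field_simps)
    from incint.exist[OF i4 x(1), of y] this y show ?thesis
      unfolding artanh_p_def by force
  qed
  have S1: "sin_p p x = a" if "0 < a" "a < 1" "arcsin_p p a = x" for a x
    using incint.the_eq[OF i1 that[unfolded arcsin_p_def]] unfolding sin_p_def arcsin_p_def .
  have S2: "tan_p p x = a" if "0 < a" "a < 1" "arctan_p p a = x" for a x
    using incint.the_eq[OF i2 that[unfolded arctan_p_def]] unfolding tan_p_def arctan_p_def .
  have S3: "sinh_p p x = a" if "0 < a" "a < 1" "arsinh_p p a = x" for a x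
    using incint.the_eq[OF i3 that[unfolded arsinh_p_def]] unfolding sinh_p_def arsinh_p_def .
  have S4: "tanh_p p x = a" if "0 < a" "a < 1" "artanh_p p a = x" for a x
    using incint.the_eq[OF i4 that[unfolded artanh_p_def]] unfolding tanh_p_def artanh_p_def .
  have P1: "sin_p p (r + s) \<le> sin_p p r + sin_p p s"
    if rs: "r \<in> {0<..<pi_p p / 4}" "s \<in> {0<..<pi_p p / 4}" for r s
  proof -
    obtain a where a: "0 < a" "a < 1" "arcsin_p p a = r" using E1[of r] rs by auto
    obtain b where b: "0 < b" "b < 1" "arcsin_p p b = s" using E1[of s] rs by auto
    obtain c where c: "0 < c" "c < 1" "arcsin_p p c = r + s" using E1[of "r + s"] rs by auto
    have "c \<le> a + b"
      by (rule incint.super_inv[OF i1 a(1,2) b(1,2) c(1,2)])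
         (use a b c M1[OF assms] in \<open>auto simp: arcsin_p_def\<close>)
    thus ?thesis using S1[OF a] S1[OF b] S1[OF c] by simp
  qed
  have P2: "tanh_p p (r + s) \<le> tanh_p p r + tanh_p p s"
    if rs: "r \<in> {0<..<b_p p / 2}" "s \<in> {0<..<b_p p / 2}" for r s
  proof -
    obtain a where a: "0 < a" "a < 1" "artanh_p p a = r" using E4[of r] rs by auto
    obtain b where b: "0 < b" "b < 1" "artanh_p p b = s" using E4[of s] rs by auto
    obtain c where c: "0 < c" "c < 1" "artanh_p p c = r + s" using E4[of "r + s"] rs by auto
    have "c \<le> a + b"
      by (rule incint.super_inv[OF i4 a(1,2) b(1,2) c(1,2)])
         (use a b c M4[OF assms] in \<open>auto simp: artanh_p_def\<close>)
    thus ?thesis using S4[OF a] S4[OF b] S4[OF c] by simp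
  qed
  have P3: "tan_p p (r + s) \<ge> tan_p p r + tan_p p s"
    if rs: "r \<in> {0<..<b_p p / 2}" "s \<in> {0<..<b_p p / 2}" for r s
  proof -
    obtain a where a: "0 < a" "a < 1" "arctan_p p a = r" using E2[of r] rs by auto
    obtain b where b: "0 < b" "b < 1" "arctan_p p b = s" using E2[of s] rs by auto
    obtain c where c: "0 < c" "c < 1" "arctan_p p c = r + s" using E2[of "r + s"] rs by auto
    have "a + b \<le> c"
      by (rule incint.sub_inv[OF i2 a(1,2) b(1,2) c(1,2)])
         (use a b c M2[OF assms] in \<open>auto simp: arctan_p_def\<close>)
    thus ?thesis using S2[OF a] S2[OF b] S2[OF c] by simp
  qed
  have P4: "sinh_p p (r + s) \<ge> sinh_p p r + sinh_p p s"
    if rs: "r \<in> {0<..<c_p p / 2}" "s \<in> {0<..<c_p p / 2}" for r s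
  proof -
    obtain a where a: "0 < a" "a < 1" "arsinh_p p a = r" using E3[of r] rs by auto
    obtain b where b: "0 < b" "b < 1" "arsinh_p p b = s" using E3[of s] rs by auto
    obtain c where c: "0 < c" "c < 1" "arsinh_p p c = r + s" using E3[of "r + s"] rs by auto
    have "a + b \<le> c"
      by (rule incint.sub_inv[OF i3 a(1,2) b(1,2) c(1,2)])
         (use a b c M3[OF assms] in \<open>auto simp: arsinh_p_def\<close>)
    thus ?thesis using S3[OF a] S3[OF b] S3[OF c] by simp
  qed
  show ?thesis using P1 P2 P3 P4 by blast
qed


end
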